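(* Let $\tau$ be a pure parabolic isometry of $\mathbb{H}^4$ with fixed point $v\in\widehat{\mathbb{R}^3}$. Then a circle $c$ in $\widehat{\mathbb{R}^3}$ satisfies $v\in c\subset h$ for some $h\in\mathcal{F}_\tau$ if and only if $c\in\mathcal{K}_\tau$.
   Context: Identify $\partial\mathbb{H}^4$ with $\widehat{\mathbb{R}^3}=\mathbb{R}^3\cup\{\infty\}$; circles include Euclidean lines with $\infty$ added. A pure parabolic isometry is a composition of reflections in two hyperplanes tangent at a unique point at infinity. After conjugation by a Möbius map $\phi$ sending $v$ to $\infty$, its boundary action is $x\mapsto x+b$ with $b\neq0$. The permuted pencil $\mathcal{F}_\tau$ is the image under $\phi^{-1}$ of the set of Euclidean planes orthogonal to $b$ (with $\infty$ added). The invariant pencil $\mathcal{T}_\tau$ is the image under $\phi^{-1}$ of the set of Euclidean planes parallel to $b$ (with $\infty$ added). The half-turn bank is $\mathcal{K}_\tau=\{s\cap t: s\in\mathcal{F}_\tau,\ t\in\mathcal{T}_\tau\}$. *)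

theory Defs
  imports "HOL-Analysis.Analysis"
begin

text \<open>The boundary sphere of H^4 is the one-point compactification of R^3;
  None plays the role of the point at infinity.\<close>
type_synonym ext3 = "(real^3) option"

definition sphere_inversion :: "real^3 \<Rightarrow> real \<Rightarrow> ext3 \<Rightarrow> ext3" where
  "sphere_inversion a r p = (case p of
      None \<Rightarrow> Some a
    | Some x \<Rightarrow> (if x = a then None
                 else Some (a + (r\<^sup>2 / (norm (x - a))\<^sup>2) *\<^sub>R (x - a))))"

definition plane_reflection :: "real^3 \<Rightarrow> real \<Rightarrow> ext3 \<Rightarrow> ext3" where
  "plane_reflection n d p = (case p of
      None \<Rightarrow> None
    | Some x \<Rightarrow> Some (x - ((2 * (x \<bullet> n - d)) / (n \<bullet> n)) *\<^sub>R n))"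

inductive mobius :: "(ext3 \<Rightarrow> ext3) \<Rightarrow> bool" where
  mobius_id: "mobius id"
| mobius_inv: "r > 0 \<Longrightarrow> mobius f \<Longrightarrow> mobius (sphere_inversion a r \<circ> f)"
| mobius_refl: "n \<noteq> 0 \<Longrightarrow> mobius f \<Longrightarrow> mobius (plane_reflection n d \<circ> f)"

definition ext_circle :: "ext3 set \<Rightarrow> bool" where
  "ext_circle c \<longleftrightarrow>
     (\<exists>a r n. r > 0 \<and> n \<noteq> 0 \<and>
        c = Some ` {x. norm (x - a) = r \<and> (x - a) \<bullet> n = 0})
   \<or> (\<exists>p u. u \<noteq> 0 \<and> c = insert None (Some ` {p + t *\<^sub>R u | t. True}))"

definition ext_plane :: "real^3 \<Rightarrow> real \<Rightarrow> ext3 set" where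
  "ext_plane n d = insert None (Some ` {x. x \<bullet> n = d})"

definition ext_translate :: "real^3 \<Rightarrow> ext3 \<Rightarrow> ext3" where
  "ext_translate b p = map_option (\<lambda>x. x + b) p"

text \<open>Permuted pencil: images under phi^{-1} (= preimages under the bijection phi)
  of the planes orthogonal to b.\<close>
definition permuted_pencil :: "(ext3 \<Rightarrow> ext3) \<Rightarrow> real^3 \<Rightarrow> ext3 set set" where
  "permuted_pencil \<phi> b = {\<phi> -` ext_plane b d | d. True}"

definition invariant_pencil :: "(ext3 \<Rightarrow> ext3) \<Rightarrow> real^3 \<Rightarrow> ext3 set set" where
  "invariant_pencil \<phi> b = {\<phi> -` ext_plane n d | n d. n \<noteq> 0 \<and> n \<bullet> b = 0}"

definition half_turn_bank :: "(ext3 \<Rightarrow> ext3) \<Rightarrow> real^3 \<Rightarrow> ext3 set set" where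
  "half_turn_bank \<phi> b = {s \<inter> t | s t. s \<in> permuted_pencil \<phi> b \<and> t \<in> invariant_pencil \<phi> b}"

end

theory Submission imports Defs "HOL-Analysis.Cross3" begin

definition gsph :: "real \<Rightarrow> real^3 \<Rightarrow> real \<Rightarrow> ext3 set" where
  "gsph al w be = {p. case p of None \<Rightarrow> al = 0 | Some x \<Rightarrow> al * (x \<bullet> x) + w \<bullet> x + be = 0}"

definition gram :: "real \<Rightarrow> real^3 \<Rightarrow> real \<Rightarrow> real \<Rightarrow> real^3 \<Rightarrow> real \<Rightarrow> real" where
  "gram a1 w1 b1 a2 w2 b2 = (w1 \<bullet> w1 - 4*a1*b1) * (w2 \<bullet> w2 - 4*a2*b2) - (w1 \<bullet> w2 - 2*(a1*b2 + a2*b1))^2"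

definition good :: "ext3 set \<Rightarrow> bool" where
  "good c \<longleftrightarrow> (\<exists>a1 w1 b1 a2 w2 b2. c = gsph a1 w1 b1 \<inter> gsph a2 w2 b2 \<and> gram a1 w1 b1 a2 w2 b2 > 0)"

definition tr :: "real^3 \<Rightarrow> ext3 \<Rightarrow> ext3" where "tr t = map_option (\<lambda>x. x + t)"
definition sc :: "real \<Rightarrow> ext3 \<Rightarrow> ext3" where "sc l = map_option (\<lambda>x. l *\<^sub>R x)"
definition hh :: "real^3 \<Rightarrow> real^3 \<Rightarrow> real^3" where "hh n x = x - (2 * (x \<bullet> n) / (n \<bullet> n)) *\<^sub>R n"
definition hr :: "real^3 \<Rightarrow> ext3 \<Rightarrow> ext3" where "hr n = map_option (hh n)"
definition jj :: "ext3 \<Rightarrow> ext3" where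
  "jj p = (case p of None \<Rightarrow> Some 0 | Some x \<Rightarrow> if x = 0 then None else Some ((1/(x \<bullet> x)) *\<^sub>R x))"

lemma tr_pre: "tr t -` gsph al w be = gsph al (w + (2*al) *\<^sub>R t) (al*(t \<bullet> t) + w \<bullet> t + be)"
proof -
  have "al * ((x + t) \<bullet> (x + t)) + w \<bullet> (x + t) + be
      = al * (x \<bullet> x) + (w + (2*al) *\<^sub>R t) \<bullet> x + (al*(t \<bullet> t) + w \<bullet> t + be)" for x
    by (simp add: inner_add_left inner_add_right inner_commute algebra_simps)
  then show ?thesis by (auto simp: gsph_def tr_def split: option.splits)
qed

lemma sc_pre: "l \<noteq> 0 \<Longrightarrow> sc l -` gsph al w be = gsph (al*l^2) (l *\<^sub>R w) be"
proof -
  have "al * ((l *\<^sub>R x) \<bullet> (l *\<^sub>R x)) + w \<bullet> (l *\<^sub>R x) + be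
      = (al*l^2) * (x \<bullet> x) + (l *\<^sub>R w) \<bullet> x + be" for x
    by (simp add: power2_eq_square algebra_simps)
  then show "l \<noteq> 0 \<Longrightarrow> ?thesis" by (auto simp: gsph_def sc_def power2_eq_square algebra_simps split: option.splits)
qed

lemma hh_norm: "n \<noteq> 0 \<Longrightarrow> hh n x \<bullet> hh n x = x \<bullet> x"
  by (simp add: hh_def inner_diff_left inner_diff_right inner_commute algebra_simps power2_eq_square
      divide_simps)

lemma hh_sym: "w \<bullet> hh n x = hh n w \<bullet> x"
  by (simp add: hh_def inner_diff_left inner_diff_right inner_commute algebra_simps)

lemma hh_inner: "n \<noteq> 0 \<Longrightarrow> hh n x \<bullet> hh n y = x \<bullet> y"
  by (simp add: hh_def inner_diff_left inner_diff_right inner_commute algebra_simps power2_eq_square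
      divide_simps)

lemma hh_hh: "n \<noteq> 0 \<Longrightarrow> hh n (hh n x) = x"
  by (simp add: hh_def inner_diff_left algebra_simps divide_simps)

lemma hr_pre: "n \<noteq> 0 \<Longrightarrow> hr n -` gsph al w be = gsph al (hh n w) be"
  by (auto simp: gsph_def hr_def hh_norm hh_sym hh_hh split: option.splits)

lemma jj_pre: "jj -` gsph al w be = gsph be w al"
proof -
  have "al * ((1/(x \<bullet> x)) *\<^sub>R x \<bullet> (1/(x \<bullet> x)) *\<^sub>R x) + w \<bullet> ((1/(x \<bullet> x)) *\<^sub>R x) + be = 0
       \<longleftrightarrow> be * (x \<bullet> x) + w \<bullet> x + al = 0" if "x \<noteq> 0" for x
  proof -
    have p: "x \<bullet> x > 0" using that by simp
    have "al * ((1/(x \<bullet> x)) *\<^sub>R x \<bullet> (1/(x \<bullet> x)) *\<^sub>R x) + w \<bullet> ((1/(x \<bullet> x)) *\<^sub>R x) + be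
        = (be * (x \<bullet> x) + w \<bullet> x + al) / (x \<bullet> x)"
      using p by (simp add: field_simps power2_eq_square)
    then show ?thesis using p by simp
  qed
  then show ?thesis
    by (auto simp: gsph_def jj_def split: option.splits if_splits)
qed

lemma gram_tr: "gram a1 (w1 + (2*a1) *\<^sub>R t) (a1*(t \<bullet> t) + w1 \<bullet> t + b1)
                     a2 (w2 + (2*a2) *\<^sub>R t) (a2*(t \<bullet> t) + w2 \<bullet> t + b2) = gram a1 w1 b1 a2 w2 b2"
  by (simp add: gram_def inner_add_left inner_add_right inner_commute algebra_simps power2_eq_square)

lemma gram_sc: "gram (a1*l^2) (l *\<^sub>R w1) b1 (a2*l^2) (l *\<^sub>R w2) b2 = l^4 * gram a1 w1 b1 a2 w2 b2"
  by (simp add: gram_def algebra_simps power2_eq_square power4_eq_xxxx)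

lemma gram_hr: "n \<noteq> 0 \<Longrightarrow> gram a1 (hh n w1) b1 a2 (hh n w2) b2 = gram a1 w1 b1 a2 w2 b2"
  by (simp add: gram_def hh_inner)

lemma gram_jj: "gram b1 w1 a1 b2 w2 a2 = gram a1 w1 b1 a2 w2 b2"
  by (simp add: gram_def algebra_simps)


lemma image_eq_pre: "(\<And>x. g (f x) = x) \<Longrightarrow> (\<And>y. f (g y) = y) \<Longrightarrow> f ` A = g -` A"
  by (auto simp: image_iff) (metis)

lemma tr_inv: "tr (-t) (tr t x) = x" "tr t (tr (-t) x) = x"
  by (cases x; simp add: tr_def)+

lemma sc_inv: "l \<noteq> 0 \<Longrightarrow> sc (1/l) (sc l x) = x" "l \<noteq> 0 \<Longrightarrow> sc l (sc (1/l) x) = x"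
  by (cases x; simp add: sc_def)+

lemma hr_inv: "n \<noteq> 0 \<Longrightarrow> hr n (hr n x) = x"
  by (cases x; simp add: hr_def hh_hh)

lemma jj_inv: "jj (jj x) = x"
proof (cases x)
  case (Some y)
  then show ?thesis
  proof (cases "y = 0")
    case False
    have p: "y \<bullet> y > 0" using False by simp
    have "(1 / ((1 / (y \<bullet> y)) *\<^sub>R y \<bullet> (1 / (y \<bullet> y)) *\<^sub>R y)) *\<^sub>R (1 / (y \<bullet> y)) *\<^sub>R y = y"
      using p by (simp add: field_simps power2_eq_square)
    then show ?thesis using Some False by (simp add: jj_def)
  qed (simp add: jj_def)
qed (simp add: jj_def)

lemma good_pre:
  assumes "good c"
    and "\<And>a w b. f -` gsph a w b = gsph (A a w b) (W a w b) (B a w b)"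
    and "\<And>a1 w1 b1 a2 w2 b2. gram a1 w1 b1 a2 w2 b2 > 0 \<Longrightarrow>
            gram (A a1 w1 b1) (W a1 w1 b1) (B a1 w1 b1) (A a2 w2 b2) (W a2 w2 b2) (B a2 w2 b2) > 0"
  shows "good (f -` c)"
proof -
  obtain a1 w1 b1 a2 w2 b2 where c: "c = gsph a1 w1 b1 \<inter> gsph a2 w2 b2" and g: "gram a1 w1 b1 a2 w2 b2 > 0"
    using assms(1) unfolding good_def by blast
  have "f -` c = gsph (A a1 w1 b1) (W a1 w1 b1) (B a1 w1 b1) \<inter> gsph (A a2 w2 b2) (W a2 w2 b2) (B a2 w2 b2)"
    using c assms(2) by (simp add: vimage_Int)
  then show ?thesis unfolding good_def using assms(3)[OF g] by blast
qed

lemma good_tr: "good c \<Longrightarrow> good (tr t ` c)"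
proof -
  assume "good c"
  have "tr t ` c = tr (-t) -` c" by (rule image_eq_pre) (simp_all add: tr_inv)
  moreover have "good (tr (-t) -` c)"
    by (rule good_pre[OF \<open>good c\<close>, OF tr_pre]) (simp only: gram_tr)
  ultimately show ?thesis by simp
qed

lemma good_sc: "l \<noteq> 0 \<Longrightarrow> good c \<Longrightarrow> good (sc l ` c)"
proof -
  assume l: "l \<noteq> 0" and "good c"
  have "sc l ` c = sc (1/l) -` c" by (rule image_eq_pre) (simp_all add: sc_inv l)
  moreover have "good (sc (1/l) -` c)"
    by (rule good_pre[OF \<open>good c\<close>, OF sc_pre]) (use l in \<open>simp_all add: gram_sc\<close>)
  ultimately show ?thesis by simp
qed

lemma good_hr: "n \<noteq> 0 \<Longrightarrow> good c \<Longrightarrow> good (hr n ` c)"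
proof -
  assume l: "n \<noteq> 0" and "good c"
  have "hr n ` c = hr n -` c" by (rule image_eq_pre) (simp_all add: hr_inv l)
  moreover have "good (hr n -` c)"
    by (rule good_pre[OF \<open>good c\<close>, OF hr_pre]) (use l in \<open>simp_all add: gram_hr\<close>)
  ultimately show ?thesis by simp
qed

lemma good_jj: "good c \<Longrightarrow> good (jj ` c)"
proof -
  assume "good c"
  have "jj ` c = jj -` c" by (rule image_eq_pre) (simp_all add: jj_inv)
  moreover have "good (jj -` c)"
    by (rule good_pre[OF \<open>good c\<close>, OF jj_pre]) (simp add: gram_jj)
  ultimately show ?thesis by simp
qed

lemma si_decomp: "r > 0 \<Longrightarrow> sphere_inversion a r = tr a \<circ> sc (r^2) \<circ> jj \<circ> tr (-a)"
proof
  fix p assume r: "r > 0"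
  show "sphere_inversion a r p = (tr a \<circ> sc (r^2) \<circ> jj \<circ> tr (-a)) p"
  proof (cases p)
    case (Some x)
    then show ?thesis
      by (simp add: sphere_inversion_def tr_def sc_def jj_def power2_norm_eq_inner)
  qed (simp add: sphere_inversion_def tr_def sc_def jj_def)
qed

lemma pr_decomp: "n \<noteq> 0 \<Longrightarrow> plane_reflection n d = tr ((2*d/(n \<bullet> n)) *\<^sub>R n) \<circ> hr n"
proof
  fix p assume n: "n \<noteq> 0"
  show "plane_reflection n d p = (tr ((2*d/(n \<bullet> n)) *\<^sub>R n) \<circ> hr n) p"
    by (cases p) (simp_all add: plane_reflection_def tr_def hr_def hh_def algebra_simps diff_divide_distrib)
qed

lemma mobius_good: "mobius \<phi> \<Longrightarrow> good c \<Longrightarrow> good (\<phi> ` c)"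
proof (induction rule: mobius.induct)
  case mobius_id
  then show ?case by simp
next
  case (mobius_inv r f a)
  have "good (f ` c)" using mobius_inv by simp
  then have "good (tr a ` sc (r^2) ` jj ` tr (-a) ` f ` c)"
    using mobius_inv(1) by (intro good_tr good_sc good_jj) simp_all
  moreover have "(sphere_inversion a r \<circ> f) ` c = tr a ` sc (r^2) ` jj ` tr (-a) ` f ` c"
    by (simp add: si_decomp[OF mobius_inv(1)] image_image)
  ultimately show ?case by simp
next
  case (mobius_refl n f d)
  have "good (f ` c)" using mobius_refl by simp
  then have "good (tr ((2*d/(n \<bullet> n)) *\<^sub>R n) ` hr n ` f ` c)"
    using mobius_refl(1) by (intro good_tr good_hr) simp_all
  moreover have "(plane_reflection n d \<circ> f) ` c = tr ((2*d/(n \<bullet> n)) *\<^sub>R n) ` hr n ` f ` c"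
    by (simp add: pr_decomp[OF mobius_refl(1)] image_image)
  ultimately show ?case by simp
qed

lemma mobius_inj: "mobius \<phi> \<Longrightarrow> inj \<phi>"
proof (induction rule: mobius.induct)
  case mobius_id
  then show ?case by simp
next
  case (mobius_inv r f a)
  have "inj (tr a \<circ> sc (r^2) \<circ> jj \<circ> tr (-a))"
    unfolding inj_def using mobius_inv(1) by (metis comp_apply tr_inv sc_inv jj_inv zero_less_power
       less_irrefl)
  then show ?case by (subst si_decomp[OF mobius_inv(1)]) (rule inj_compose[OF _ mobius_inv(3)])
next
  case (mobius_refl n f d)
  have "inj (tr ((2*d/(n \<bullet> n)) *\<^sub>R n) \<circ> hr n)"
    unfolding inj_def using mobius_refl(1) by (metis comp_apply tr_inv hr_inv)
  then show ?case by (subst pr_decomp[OF mobius_refl(1)]) (rule inj_compose[OF _ mobius_refl(3)])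
qed


lemma triple: "cross3 (cross3 a b) c = (a \<bullet> c) *\<^sub>R b - (b \<bullet> c) *\<^sub>R a"
  unfolding vec_eq_iff forall_3 by (simp add: cross3_def inner_vec_def sum_3 vector_def algebra_simps)

lemma triple2: "cross3 a (cross3 b c) = (a \<bullet> c) *\<^sub>R b - (a \<bullet> b) *\<^sub>R c"
  unfolding vec_eq_iff forall_3 by (simp add: cross3_def inner_vec_def sum_3 vector_def algebra_simps)

lemma line_eq:
  fixes v1 v2 u p :: "real^3"
  assumes "cross3 v1 v2 = k *\<^sub>R u" "k \<noteq> 0" "u \<noteq> 0" "u \<bullet> v1 = 0" "u \<bullet> v2 = 0"
    "p \<bullet> v1 = e1" "p \<bullet> v2 = e2"
  shows "{x. x \<bullet> v1 = e1 \<and> x \<bullet> v2 = e2} = {p + t *\<^sub>R u | t. True}"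
proof (rule set_eqI, rule iffI)
  fix x assume "x \<in> {x. x \<bullet> v1 = e1 \<and> x \<bullet> v2 = e2}"
  then have y1: "(x - p) \<bullet> v1 = 0" and y2: "(x - p) \<bullet> v2 = 0" using assms by (auto simp: inner_diff_left)
  define y where "y = x - p"
  define w where "w = cross3 v1 v2"
  have wn: "w \<noteq> 0" using assms by (simp add: w_def)
  have a: "cross3 w y = 0" using triple[of v1 v2 y] y1 y2 by (simp add: inner_commute w_def y_def)
  have "cross3 w (cross3 w y) = (w \<bullet> y) *\<^sub>R w - (w \<bullet> w) *\<^sub>R y"
    by (simp add: triple2)
  then have "(w \<bullet> w) *\<^sub>R y = (w \<bullet> y) *\<^sub>R w" using a by simp
  moreover have "w \<bullet> w \<noteq> 0" using wn by simp
  ultimately have "y = ((w \<bullet> y) / (w \<bullet> w)) *\<^sub>R w"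
    by (metis (no_types, lifting) divide_inverse_commute scaleR_scaleR inverse_eq_divide
        right_inverse scaleR_one mult.commute)
  also have "\<dots> = ((w \<bullet> y) / (w \<bullet> w) * k) *\<^sub>R u" using assms by (simp add: w_def)
  finally have "x = p + ((w \<bullet> y) / (w \<bullet> w) * k) *\<^sub>R u" unfolding y_def by (simp add: algebra_simps)
  then show "x \<in> {p + t *\<^sub>R u | t. True}" by blast
next
  fix x assume "x \<in> {p + t *\<^sub>R u | t. True}"
  then show "x \<in> {x. x \<bullet> v1 = e1 \<and> x \<bullet> v2 = e2}" using assms
    by (auto simp: inner_add_left)
qed

lemma circle_good:
  assumes "r > 0" "n \<noteq> 0"
  shows "good (Some ` {x. norm (x - a) = r \<and> (x - a) \<bullet> n = 0})"
proof -
  have e: "Some ` {x. norm (x - a) = r \<and> (x - a) \<bullet> n = 0} = gsph 1 (-2 *\<^sub>R a) (a \<bullet> a - r^2) \<inter> gsph 0 n (-(a \<bullet> n))"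
  proof (rule set_eqI)
    fix p show "p \<in> Some ` {x. norm (x - a) = r \<and> (x - a) \<bullet> n = 0} \<longleftrightarrow> p \<in> gsph 1 (-2 *\<^sub>R a) (a \<bullet> a - r^2) \<inter> gsph 0 n (-(a \<bullet> n))"
    proof (cases p)
      case (Some x)
      have A: "norm (x - a) = r \<longleftrightarrow> 1 * (x \<bullet> x) + (-2 *\<^sub>R a) \<bullet> x + (a \<bullet> a - r^2) = 0"
      proof -
        have "norm (x - a) = r \<longleftrightarrow> (norm (x - a))^2 = r^2" using assms(1)
          by (metis norm_ge_zero power2_eq_iff_nonneg less_imp_le)
        also have "\<dots> \<longleftrightarrow> 1 * (x \<bullet> x) + (-2 *\<^sub>R a) \<bullet> x + (a \<bullet> a - r^2) = 0"
          by (simp add: power2_norm_eq_inner inner_diff_left inner_diff_right inner_commute algebra_simps)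
        finally show ?thesis .
      qed
      have B: "(x - a) \<bullet> n = 0 \<longleftrightarrow> 0 * (x \<bullet> x) + n \<bullet> x + -(a \<bullet> n) = 0"
        by (simp add: inner_diff_left inner_commute[of n x] inner_commute[of n a])
      have "p \<in> Some ` {x. norm (x - a) = r \<and> (x - a) \<bullet> n = 0} \<longleftrightarrow> (norm (x - a) = r \<and> (x - a) \<bullet> n = 0)"
        using Some by auto
      also have "\<dots> \<longleftrightarrow> (1 * (x \<bullet> x) + (-2 *\<^sub>R a) \<bullet> x + (a \<bullet> a - r^2) = 0 \<and> 0 * (x \<bullet> x) + n \<bullet> x + -(a \<bullet> n) = 0)"
        using A B by blast
      also have "\<dots> \<longleftrightarrow> p \<in> gsph 1 (-2 *\<^sub>R a) (a \<bullet> a - r^2) \<inter> gsph 0 n (-(a \<bullet> n))"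
        using Some by (simp add: gsph_def)
      finally show ?thesis .
    qed (auto simp: gsph_def)
  qed
  have "gram 1 (-2 *\<^sub>R a) (a \<bullet> a - r^2) 0 n (-(a \<bullet> n)) = 4 * r^2 * (n \<bullet> n)"
    by (simp add: gram_def algebra_simps power2_eq_square)
  moreover have "4 * r^2 * (n \<bullet> n) > 0" using assms by simp
  ultimately show ?thesis unfolding good_def e by metis
qed

lemma exists_orth: "u \<noteq> (0::real^3) \<Longrightarrow> \<exists>n. n \<noteq> 0 \<and> u \<bullet> n = 0"
proof -
  assume u: "u \<noteq> 0"
  show ?thesis
  proof (cases "cross3 u (axis 1 1) = 0")
    case False then show ?thesis using dot_cross_self(1) by blast
  next
    case True
    show ?thesis
    proof (cases "cross3 u (axis 2 1) = 0")
      case False then show ?thesis using dot_cross_self(1) by blast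
    next
      case True2: True
      have "u = 0" using True True2
        unfolding vec_eq_iff forall_3 by (simp add: cross3_def vector_def axis_def)
      then show ?thesis using u by simp
    qed
  qed
qed

lemma line_good:
  assumes "u \<noteq> 0"
  shows "good (insert None (Some ` {p + t *\<^sub>R u | t. True}))"
proof -
  obtain n1 where n1: "n1 \<noteq> 0" "u \<bullet> n1 = 0" using exists_orth[OF assms] by blast
  define n2 where "n2 = cross3 u n1"
  have c: "cross3 n1 n2 = (n1 \<bullet> n1) *\<^sub>R u" unfolding n2_def triple2 using n1 by (simp add: inner_commute)
  have n12: "n1 \<bullet> n2 = 0" unfolding n2_def by (simp add: dot_cross_self)
  have un2: "u \<bullet> n2 = 0" unfolding n2_def by (simp add: dot_cross_self)
  have "(norm n2)^2 = (norm u)^2 * (norm n1)^2" unfolding n2_def norm_cross using n1 by simp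
  then have n2: "n2 \<noteq> 0" using n1 assms by auto
  have L: "{x. x \<bullet> n1 = p \<bullet> n1 \<and> x \<bullet> n2 = p \<bullet> n2} = {p + t *\<^sub>R u | t. True}"
    by (rule line_eq[OF c]) (use n1 un2 assms in auto)
  have e: "insert None (Some ` {p + t *\<^sub>R u | t. True}) = gsph 0 n1 (-(p \<bullet> n1)) \<inter> gsph 0 n2 (-(p \<bullet> n2))"
  proof (rule set_eqI)
    fix q show "q \<in> insert None (Some ` {p + t *\<^sub>R u | t. True}) \<longleftrightarrow> q \<in> gsph 0 n1 (-(p \<bullet> n1)) \<inter> gsph 0 n2 (-(p \<bullet> n2))"
      unfolding L[symmetric] by (cases q) (auto simp: gsph_def inner_commute)
  qed
  have "gram 0 n1 (-(p \<bullet> n1)) 0 n2 (-(p \<bullet> n2)) = (n1 \<bullet> n1) * (n2 \<bullet> n2)"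
    by (simp add: gram_def n12)
  moreover have "(n1 \<bullet> n1) * (n2 \<bullet> n2) > 0" using n1 n2 by simp
  ultimately show ?thesis unfolding good_def e by metis
qed

lemma circle_good_all: "ext_circle c \<Longrightarrow> good c"
  unfolding ext_circle_def using circle_good line_good by blast


lemma cross_sq: "cross3 x y \<bullet> cross3 x y = (x \<bullet> x) * (y \<bullet> y) - (x \<bullet> y)^2"
  by (simp add: dot_cross power2_eq_square inner_commute)

lemma cramer1:
  fixes A B M b1 b2 :: real
  assumes "A * B - M^2 \<noteq> 0"
  shows "(-b1 * B + b2 * M) / (A * B - M^2) * A + (-b2 * A + b1 * M) / (A * B - M^2) * M = -b1"
proof -
  have "(-b1 * B + b2 * M) / (A * B - M^2) * A + (-b2 * A + b1 * M) / (A * B - M^2) * M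
      = ((-b1 * B + b2 * M) * A + (-b2 * A + b1 * M) * M) / (A * B - M^2)"
    by (simp add: add_divide_distrib)
  also have "\<dots> = (-b1 * (A * B - M^2)) / (A * B - M^2)"
    by (simp add: algebra_simps power2_eq_square)
  finally show ?thesis using assms by simp
qed

lemma good_none:
  assumes "good C" "None \<in> C"
  shows "\<exists>w1 b1 w2 b2. C = gsph 0 w1 b1 \<inter> gsph 0 w2 b2 \<and> cross3 w1 w2 \<noteq> 0"
proof -
  obtain a1 w1 b1 a2 w2 b2 where c: "C = gsph a1 w1 b1 \<inter> gsph a2 w2 b2" and g: "gram a1 w1 b1 a2 w2 b2 > 0"
    using assms(1) unfolding good_def by blast
  have a: "a1 = 0" "a2 = 0" using assms(2) c by (auto simp: gsph_def)
  have "gram a1 w1 b1 a2 w2 b2 = cross3 w1 w2 \<bullet> cross3 w1 w2"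
    using a by (simp add: gram_def cross_sq)
  then have "cross3 w1 w2 \<noteq> 0" using g by auto
  then show ?thesis using c a by blast
qed

lemma final_geom:
  assumes C: "C = gsph 0 w1 b1 \<inter> gsph 0 w2 b2" and u0: "cross3 w1 w2 \<noteq> 0"
    and sub: "C \<subseteq> ext_plane b d" and b: "b \<noteq> 0"
  shows "\<exists>n e. n \<noteq> 0 \<and> n \<bullet> b = 0 \<and> C = ext_plane b d \<inter> ext_plane n e"
proof -
  define u where "u = cross3 w1 w2"
  define G where "G = (w1 \<bullet> w1) * (w2 \<bullet> w2) - (w1 \<bullet> w2)^2"
  have G: "G = u \<bullet> u" unfolding G_def u_def cross_sq by simp
  have Gn: "G \<noteq> 0" using u0 G u_def by simp
  define l1 where "l1 = (-b1 * (w2 \<bullet> w2) + b2 * (w1 \<bullet> w2)) / G"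
  define l2 where "l2 = (-b2 * (w1 \<bullet> w1) + b1 * (w1 \<bullet> w2)) / G"
  define p where "p = l1 *\<^sub>R w1 + l2 *\<^sub>R w2"
  have "p \<bullet> w1 = l1 * (w1 \<bullet> w1) + l2 * (w1 \<bullet> w2)"
    unfolding p_def by (simp add: inner_add_left inner_commute[of w2 w1])
  also have "\<dots> = -b1" unfolding l1_def l2_def G_def
    by (rule cramer1) (use Gn G_def in simp)
  finally have p1: "p \<bullet> w1 = -b1" .
  have "p \<bullet> w2 = l2 * (w2 \<bullet> w2) + l1 * (w1 \<bullet> w2)"
    unfolding p_def by (simp add: inner_add_left)
  also have "\<dots> = -b2"
  proof -
    have "(w1 \<bullet> w1) * (w2 \<bullet> w2) = (w2 \<bullet> w2) * (w1 \<bullet> w1)" by simp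
    then have GG: "G = (w2 \<bullet> w2) * (w1 \<bullet> w1) - (w1 \<bullet> w2)^2" unfolding G_def by simp
    show ?thesis unfolding l1_def l2_def GG
      by (rule cramer1) (use Gn GG in simp)
  qed
  finally have p2: "p \<bullet> w2 = -b2" .
  have w1n: "w1 \<noteq> 0" using u0 by auto
  have u1: "u \<bullet> w1 = 0" "u \<bullet> w2 = 0" unfolding u_def by (simp_all add: dot_cross_self)
  have L: "{x. x \<bullet> w1 = -b1 \<and> x \<bullet> w2 = -b2} = {p + t *\<^sub>R u | t. True}"
    by (rule line_eq[of _ _ 1]) (use u0 u1 p1 p2 in \<open>simp_all add: u_def\<close>)
  have C2: "C = insert None (Some ` {p + t *\<^sub>R u | t. True})"
  proof (rule set_eqI)
    fix q show "q \<in> C \<longleftrightarrow> q \<in> insert None (Some ` {p + t *\<^sub>R u | t. True})"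
      unfolding L[symmetric] C
      by (cases q) (auto simp: gsph_def inner_commute add_eq_0_iff)
  qed
  have "Some (p + 0 *\<^sub>R u) \<in> C" "Some (p + 1 *\<^sub>R u) \<in> C" unfolding C2 by blast+
  then have pd: "p \<bullet> b = d" and "(p + u) \<bullet> b = d" using sub by (auto simp: ext_plane_def)
  then have ub: "u \<bullet> b = 0" by (simp add: inner_add_left)
  define n where "n = cross3 b u"
  have "(norm n)^2 = (norm b)^2 * (norm u)^2" unfolding n_def norm_cross using ub by (simp add: inner_commute)
  moreover have "u \<noteq> 0" using u0 u_def by simp
  ultimately have nn: "n \<noteq> 0" using b by auto
  have nb: "n \<bullet> b = 0" unfolding n_def by (simp add: dot_cross_self)
  have un: "u \<bullet> n = 0" unfolding n_def by (simp add: dot_cross_self)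
  have cr: "cross3 b n = (-(b \<bullet> b)) *\<^sub>R u" unfolding n_def triple2 using ub by (simp add: inner_commute)
  have L2: "{x. x \<bullet> b = d \<and> x \<bullet> n = p \<bullet> n} = {p + t *\<^sub>R u | t. True}"
    by (rule line_eq[OF cr]) (use b \<open>u \<noteq> 0\<close> ub un pd in \<open>simp_all add: inner_commute\<close>)
  have "ext_plane b d \<inter> ext_plane n (p \<bullet> n) = insert None (Some ` {x. x \<bullet> b = d \<and> x \<bullet> n = p \<bullet> n})"
    unfolding ext_plane_def by auto
  then have "C = ext_plane b d \<inter> ext_plane n (p \<bullet> n)" using C2 L2 by simp
  then show ?thesis using nn nb by blast
qed

theorem theorem5p8:
  fixes \<tau> \<phi> :: "ext3 \<Rightarrow> ext3" and v :: ext3 and b :: "real^3" and c :: "ext3 set"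
  assumes "mobius \<phi>"
    and "\<phi> v = None"
    and "b \<noteq> 0"
    and "\<And>p. \<phi> (\<tau> p) = ext_translate b (\<phi> p)"
    and "ext_circle c"
  shows "(v \<in> c \<and> (\<exists>h \<in> permuted_pencil \<phi> b. c \<subseteq> h)) \<longleftrightarrow> c \<in> half_turn_bank \<phi> b"
proof
  assume "v \<in> c \<and> (\<exists>h \<in> permuted_pencil \<phi> b. c \<subseteq> h)"
  then obtain d where vc: "v \<in> c" and sub: "c \<subseteq> \<phi> -` ext_plane b d"
    unfolding permuted_pencil_def by blast
  have g: "good (\<phi> ` c)" using mobius_good[OF assms(1) circle_good_all[OF assms(5)]] .
  have "None \<in> \<phi> ` c" using vc assms(2) by force
  then obtain w1 b1 w2 b2 where C: "\<phi> ` c = gsph 0 w1 b1 \<inter> gsph 0 w2 b2" "cross3 w1 w2 \<noteq> 0"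
    using good_none[OF g] by blast
  have sub2: "\<phi> ` c \<subseteq> ext_plane b d" using sub by auto
  obtain n e where ne: "n \<noteq> 0" "n \<bullet> b = 0" "\<phi> ` c = ext_plane b d \<inter> ext_plane n e"
    using final_geom[OF C sub2 assms(3)] by blast
  have "c = \<phi> -` (\<phi> ` c)" using mobius_inj[OF assms(1)] by (simp add: inj_vimage_image_eq)
  also have "\<dots> = \<phi> -` ext_plane b d \<inter> \<phi> -` ext_plane n e" using ne by simp
  finally show "c \<in> half_turn_bank \<phi> b"
    unfolding half_turn_bank_def permuted_pencil_def invariant_pencil_def using ne by blast
next
  assume "c \<in> half_turn_bank \<phi> b"
  then obtain d n e where c: "c = \<phi> -` ext_plane b d \<inter> \<phi> -` ext_plane n e"
    unfolding half_turn_bank_def permuted_pencil_def invariant_pencil_def by blast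
  have "v \<in> c" using c assms(2) by (simp add: ext_plane_def)
  moreover have "\<phi> -` ext_plane b d \<in> permuted_pencil \<phi> b" unfolding permuted_pencil_def by blast
  ultimately show "v \<in> c \<and> (\<exists>h \<in> permuted_pencil \<phi> b. c \<subseteq> h)" using c by blast
qed

end
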